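(* For integers $n\ge 0$ and $p$ with $p\le n+1$, $$\sum_{j,k}\genfrac{[}{]}{0pt}{}{n}{k}\binom{k}{j}\genfrac{\{}{\}}{0pt}{}{j+1}{p}(-1)^j=\begin{cases}0,&(n+1>p)\\(-1)^n,&(n+1=p).\end{cases}$$
   Context: Here $\genfrac{[}{]}{0pt}{}{n}{k}$ denotes the unsigned (absolute) Stirling number of the first kind and $\genfrac{\{}{\}}{0pt}{}{n}{k}$ the ordinary Stirling number of the second kind (Knuth's notation), with $\genfrac{[}{]}{0pt}{}{0}{0}=\genfrac{\{}{\}}{0pt}{}{0}{0}=1$, $\genfrac{[}{]}{0pt}{}{n}{0}=\genfrac{\{}{\}}{0pt}{}{n}{0}=0$ for $n>0$, and $\genfrac{[}{]}{0pt}{}{n}{k}=\genfrac{\{}{\}}{0pt}{}{n}{k}=0$ for $0\le n<k$. The double sum is over all integers $j,k$ with $0\le j\le k\le n$. *)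

theory Defs
  imports "HOL-Combinatorics.Stirling"
begin

text \<open>Stirling numbers of the second kind with an integer lower index:
  zero for negative lower index (the natural convention; the paper allows any integer p).\<close>
definition Stirling_int :: "nat \<Rightarrow> int \<Rightarrow> int" where
  "Stirling_int m p = (if p < 0 then 0 else int (Stirling m (nat p)))"

end

theory Submission
  imports Defs "HOL-Computational_Algebra.Polynomial"
begin

definition cc :: "nat \<Rightarrow> nat \<Rightarrow> int" where
  "cc n j = coeff (pochhammer [:1,1::int:] n) j"

lemma cc_0: "cc 0 j = (if j = 0 then 1 else 0)"
  by (simp add: cc_def coeff_1)

lemma cc_Suc: "cc (Suc n) j = (int n + 1) * cc n j + (case j of 0 \<Rightarrow> 0 | Suc i \<Rightarrow> cc n i)"
proof -
  have "[:1,1::int:] + of_nat n = smult (int n + 1) 1 + pCons 0 1"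
    by (simp add: of_nat_poly one_pCons)
  hence "pochhammer [:1,1::int:] (Suc n) = smult (int n + 1) (pochhammer [:1,1:] n) + pCons 0 (pochhammer [:1,1:] n)"
    by (simp add: pochhammer_Suc algebra_simps)
  thus ?thesis by (cases j) (simp_all add: cc_def)
qed

lemma cc_big: "j > n \<Longrightarrow> cc n j = 0"
proof (induction n arbitrary: j)
  case 0 thus ?case by (simp add: cc_0)
next
  case (Suc n) thus ?case by (cases j) (auto simp: cc_Suc)
qed

lemma coeff_lin_pow: "coeff ([:1,1::int:] ^ k) j = int (k choose j)"
proof (cases "j \<le> k")
  case True thus ?thesis by (simp add: coeff_linear_poly_power)
next
  case False
  hence "coeff ([:1,1::int:] ^ k) j = 0"
    by (intro coeff_eq_0) (simp add: degree_power_le le_less_trans[OF degree_power_le])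
  thus ?thesis using False by simp
qed

lemma cc_sum: "cc n j = (\<Sum>k\<le>n. int (stirling n k) * int (k choose j))"
proof -
  have "pochhammer [:1,1::int:] n = (\<Sum>k\<le>n. of_nat (stirling n k) * [:1,1:] ^ k)"
    by (simp add: stirling_pochhammer)
  hence "cc n j = (\<Sum>k\<le>n. coeff (of_nat (stirling n k) * [:1,1::int:] ^ k) j)"
    by (simp add: cc_def coeff_sum)
  also have "\<dots> = (\<Sum>k\<le>n. int (stirling n k) * int (k choose j))"
    by (simp add: of_nat_mult_conv_smult coeff_lin_pow)
  finally show ?thesis .
qed

definition T :: "nat \<Rightarrow> nat \<Rightarrow> int" where
  "T n p = (\<Sum>j\<le>n. cc n j * (-1) ^ j * int (Stirling (Suc j) p))"

lemma T_rec: "T (Suc n) (Suc q) = (int n - int q) * T n (Suc q) - T n q"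
proof -
  have "T (Suc n) (Suc q) = (\<Sum>j\<le>Suc n. ((int n + 1) * cc n j) * (-1) ^ j * int (Stirling (Suc j) (Suc q)))
     + (\<Sum>j\<le>Suc n. (case j of 0 \<Rightarrow> 0 | Suc i \<Rightarrow> cc n i) * (-1) ^ j * int (Stirling (Suc j) (Suc q)))"
    unfolding T_def cc_Suc by (simp add: algebra_simps sum.distrib)
  also have "(\<Sum>j\<le>Suc n. ((int n + 1) * cc n j) * (-1) ^ j * int (Stirling (Suc j) (Suc q)))
      = (int n + 1) * T n (Suc q)"
    by (simp add: T_def sum_distrib_left cc_big algebra_simps)
  also have "(\<Sum>j\<le>Suc n. (case j of 0 \<Rightarrow> 0 | Suc i \<Rightarrow> cc n i) * (-1) ^ j * int (Stirling (Suc j) (Suc q)))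
      = (\<Sum>i\<le>n. - (cc n i * (-1) ^ i * int (Stirling (Suc (Suc i)) (Suc q))))"
    by (subst sum.atMost_Suc_shift) simp
  also have "\<dots> = - (int q + 1) * T n (Suc q) - T n q"
  proof -
    have "(\<Sum>i\<le>n. - (cc n i * (-1) ^ i * int (Stirling (Suc (Suc i)) (Suc q))))
       = (\<Sum>i\<le>n. - (int q + 1) * (cc n i * (-1) ^ i * int (Stirling (Suc i) (Suc q)))
            - cc n i * (-1) ^ i * int (Stirling (Suc i) q))"
      by (rule sum.cong[OF refl]) (simp only: Stirling.simps(4), simp add: algebra_simps)
    also have "\<dots> = - (int q + 1) * T n (Suc q) - T n q"
      unfolding T_def by (simp only: sum_subtractf sum_distrib_left)
    finally show ?thesis .
  qed
  finally show ?thesis by (simp add: algebra_simps)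
qed

lemma T_val: "T n p = (if p = Suc n then (-1) ^ n else 0)"
proof (induction n arbitrary: p)
  case 0 thus ?case by (cases p) (auto simp: T_def cc_0)
next
  case (Suc n)
  show ?case
  proof (cases p)
    case 0 thus ?thesis by (simp add: T_def)
  next
    case (Suc q)
    thus ?thesis using Suc.IH by (auto simp: T_rec)
  qed
qed

theorem mainTheorem5:
  fixes n :: nat and p :: int
  assumes "p \<le> int n + 1"
  shows "(\<Sum>k\<le>n. \<Sum>j\<le>k. int (stirling n k) * int (k choose j)
            * Stirling_int (j + 1) p * (-1) ^ j)
         = (if int n + 1 > p then 0 else (-1) ^ n)"
proof -
  have "(\<Sum>k\<le>n. \<Sum>j\<le>k. int (stirling n k) * int (k choose j) * Stirling_int (j + 1) p * (-1) ^ j)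
      = (\<Sum>k\<le>n. \<Sum>j\<le>n. int (stirling n k) * int (k choose j) * Stirling_int (j + 1) p * (-1) ^ j)"
  proof (rule sum.cong[OF refl])
    fix k assume "k \<in> {..n}"
    hence u: "{..n} = {..k} \<union> {k<..n}" by auto
    have z: "(\<Sum>j\<in>{k<..n}. int (stirling n k) * int (k choose j) * Stirling_int (j + 1) p * (-1) ^ j) = 0"
      by (rule sum.neutral) simp
    show "(\<Sum>j\<le>k. int (stirling n k) * int (k choose j) * Stirling_int (j + 1) p * (-1) ^ j)
      = (\<Sum>j\<le>n. int (stirling n k) * int (k choose j) * Stirling_int (j + 1) p * (-1) ^ j)"
      unfolding u by (subst sum.union_disjoint) (use z in auto)
  qed
  also have "\<dots> = (\<Sum>j\<le>n. cc n j * (-1) ^ j * Stirling_int (j + 1) p)"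
    by (subst sum.swap) (simp add: cc_sum sum_distrib_left sum_distrib_right mult_ac)
  also have "\<dots> = (if int n + 1 > p then 0 else (-1) ^ n)"
  proof (cases "p < 0")
    case True thus ?thesis by (simp add: Stirling_int_def)
  next
    case False
    hence "(\<Sum>j\<le>n. cc n j * (-1) ^ j * Stirling_int (j + 1) p) = T n (nat p)"
      by (simp add: T_def Stirling_int_def)
    thus ?thesis using False assms by (simp add: T_val) linarith
  qed
  finally show ?thesis .
qed

end
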